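(* Let $A$ be a metabelian Lie algebra over a field $k$ and let $a\in A$ be such that $a\circ c=0$ for every $c\in A^2$. Then $a\in\mathrm{Fit}(A)$.
   Context: A Lie algebra is metabelian if $(a\circ b)\circ(c\circ d)=0$ identically. $A^2$ is the ideal spanned by all products $a\circ b$; $\mathrm{Fit}(A)$ (Fitting radical) is the ideal generated by all elements lying in nilpotent ideals of $A$. *)

theory Defs
  imports Main "HOL.Vector_Spaces"
begin

text \<open>A Lie algebra over a field 'k: the carrier is the whole type 'v, which is a
  'k-vector space via scale; br is the Lie bracket (written a \<circ> b in the paper).\<close>

definition lie_algebra :: "('k::field \<Rightarrow> 'v::ab_group_add \<Rightarrow> 'v) \<Rightarrow> ('v \<Rightarrow> 'v \<Rightarrow> 'v) \<Rightarrow> bool" where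
  "lie_algebra scale br \<longleftrightarrow>
     vector_space scale \<and>
     (\<forall>x y z. br (x + y) z = br x z + br y z) \<and>
     (\<forall>x y z. br x (y + z) = br x y + br x z) \<and>
     (\<forall>c x y. br (scale c x) y = scale c (br x y)) \<and>
     (\<forall>c x y. br x (scale c y) = scale c (br x y)) \<and>
     (\<forall>x. br x x = 0) \<and>
     (\<forall>x y z. br x (br y z) + br y (br z x) + br z (br x y) = 0)"

definition metabelian :: "('v::ab_group_add \<Rightarrow> 'v \<Rightarrow> 'v) \<Rightarrow> bool" where
  "metabelian br \<longleftrightarrow> (\<forall>a b c d. br (br a b) (br c d) = 0)"

definition lie_prod :: "('k::field \<Rightarrow> 'v::ab_group_add \<Rightarrow> 'v) \<Rightarrow> ('v \<Rightarrow> 'v \<Rightarrow> 'v) \<Rightarrow> 'v set \<Rightarrow> 'v set \<Rightarrow> 'v set" where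
  "lie_prod scale br X Y = module.span scale {br x y | x y. x \<in> X \<and> y \<in> Y}"

definition lie_square :: "('k::field \<Rightarrow> 'v::ab_group_add \<Rightarrow> 'v) \<Rightarrow> ('v \<Rightarrow> 'v \<Rightarrow> 'v) \<Rightarrow> 'v set" where
  "lie_square scale br = lie_prod scale br UNIV UNIV"

definition lie_ideal :: "('k::field \<Rightarrow> 'v::ab_group_add \<Rightarrow> 'v) \<Rightarrow> ('v \<Rightarrow> 'v \<Rightarrow> 'v) \<Rightarrow> 'v set \<Rightarrow> bool" where
  "lie_ideal scale br I \<longleftrightarrow> module.subspace scale I \<and>
     (\<forall>x\<in>I. \<forall>y. br y x \<in> I \<and> br x y \<in> I)"

text \<open>Lower central series of a subset I (viewed as Lie algebra):
  I^1 = I, I^(n+1) = I \<circ> I^n (indexed from 0 here).\<close>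
primrec lower_central :: "('k::field \<Rightarrow> 'v::ab_group_add \<Rightarrow> 'v) \<Rightarrow> ('v \<Rightarrow> 'v \<Rightarrow> 'v) \<Rightarrow> 'v set \<Rightarrow> nat \<Rightarrow> 'v set" where
  "lower_central scale br I 0 = I"
| "lower_central scale br I (Suc n) = lie_prod scale br I (lower_central scale br I n)"

definition nilpotent_ideal :: "('k::field \<Rightarrow> 'v::ab_group_add \<Rightarrow> 'v) \<Rightarrow> ('v \<Rightarrow> 'v \<Rightarrow> 'v) \<Rightarrow> 'v set \<Rightarrow> bool" where
  "nilpotent_ideal scale br I \<longleftrightarrow> lie_ideal scale br I \<and> (\<exists>n. lower_central scale br I n = {0})"

definition fitting :: "('k::field \<Rightarrow> 'v::ab_group_add \<Rightarrow> 'v) \<Rightarrow> ('v \<Rightarrow> 'v \<Rightarrow> 'v) \<Rightarrow> 'v set" where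
  "fitting scale br = \<Inter>{J. lie_ideal scale br J \<and> \<Union>{I. nilpotent_ideal scale br I} \<subseteq> J}"

end

theory Submission
  imports Defs
begin

theorem lemma2p1p4:
  fixes scale :: "'k::field \<Rightarrow> 'v::ab_group_add \<Rightarrow> 'v"
    and br :: "'v \<Rightarrow> 'v \<Rightarrow> 'v"
    and a :: 'v
  assumes "lie_algebra scale br"
    and "metabelian br"
    and "\<forall>c \<in> lie_square scale br. br a c = 0"
  shows "a \<in> fitting scale br"
proof -
  interpret vector_space scale using assms(1) unfolding lie_algebra_def by blast
  have addl: "\<And>x y z. br (x + y) z = br x z + br y z"
   and addr: "\<And>x y z. br x (y + z) = br x y + br x z"
   and scl: "\<And>c x y. br (scale c x) y = scale c (br x y)"
   and scr: "\<And>c x y. br x (scale c y) = scale c (br x y)"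
   and alt: "\<And>x. br x x = 0"
    using assms(1) unfolding lie_algebra_def by blast+
  have met: "\<And>a b c d. br (br a b) (br c d) = 0" using assms(2) unfolding metabelian_def by blast
  have z1: "\<And>x. br 0 x = 0" using addl[of 0 0] by simp
  have z2: "\<And>x. br x 0 = 0" using addr[of _ 0 0] by simp
  have anti: "\<And>x y. br y x = - br x y"
  proof -
    fix x y
    have "br (x+y) (x+y) = 0" by (rule alt)
    also have "br (x+y) (x+y) = br x x + br x y + (br y x + br y y)" by (simp add: addl addr)
    finally have "br x y + br y x = 0" by (simp add: alt)
    thus "br y x = - br x y" by (simp add: add_eq_0_iff)
  qed
  define Q where "Q = lie_square scale br"
  have Qdef: "Q = span {br x y | x y. True}"
    unfolding Q_def lie_square_def lie_prod_def by simp
  have Qsub: "subspace Q" unfolding Qdef by (rule subspace_span)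
  have prodQ: "\<And>x y. br x y \<in> Q" unfolding Qdef by (rule span_base) blast
  have S1: "\<forall>c\<in>Q. \<forall>u v. br c (br u v) = 0"
  proof -
    have "span {br x y | x y. True} \<subseteq> {c. \<forall>u v. br c (br u v) = 0}"
    proof (rule span_minimal)
      show "{br x y | x y. True} \<subseteq> {c. \<forall>u v. br c (br u v) = 0}" using met by blast
      show "subspace {c. \<forall>u v. br c (br u v) = 0}"
        unfolding subspace_def by (simp add: z1 addl scl)
    qed
    thus ?thesis unfolding Qdef by blast
  qed
  have S2: "\<forall>c'\<in>Q. \<forall>c\<in>Q. br c c' = 0"
  proof -
    have "span {br x y | x y. True} \<subseteq> {c'. \<forall>c\<in>Q. br c c' = 0}"
    proof (rule span_minimal)
      show "{br x y | x y. True} \<subseteq> {c'. \<forall>c\<in>Q. br c c' = 0}" using S1 by blast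
      show "subspace {c'. \<forall>c\<in>Q. br c c' = 0}"
        unfolding subspace_def by (simp add: z2 addr scr)
    qed
    thus ?thesis unfolding Qdef by blast
  qed
  have aQ: "\<And>c. c \<in> Q \<Longrightarrow> br a c = 0" using assms(3) unfolding Q_def by blast
  define I where "I = {scale t a + c | t c. c \<in> Q}"
  have Q0: "0 \<in> Q" using Qsub subspace_def by blast
  have QI: "\<And>c. c \<in> Q \<Longrightarrow> c \<in> I" unfolding I_def by (rule CollectI, rule exI[of _ 0]) auto
  have aI: "a \<in> I" unfolding I_def using Q0 by (intro CollectI exI[of _ 1] exI[of _ 0]) auto
  have Isub: "subspace I"
    unfolding subspace_def
  proof (intro conjI ballI allI)
    show "0 \<in> I" using QI Q0 by blast
  next
    fix x y assume "x \<in> I" "y \<in> I"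
    then obtain t c s d where "x = scale t a + c" "c \<in> Q" "y = scale s a + d" "d \<in> Q"
      unfolding I_def by blast
    moreover have "c + d \<in> Q" using Qsub \<open>c\<in>Q\<close> \<open>d\<in>Q\<close> by (simp add: subspace_def)
    ultimately show "x + y \<in> I" unfolding I_def
      by (intro CollectI exI[of _ "t+s"] exI[of _ "c+d"]) (simp add: scale_left_distrib algebra_simps)
  next
    fix r x assume "x \<in> I"
    then obtain t c where "x = scale t a + c" "c \<in> Q" unfolding I_def by blast
    moreover have "scale r c \<in> Q" using Qsub \<open>c\<in>Q\<close> by (simp add: subspace_def)
    ultimately show "scale r x \<in> I" unfolding I_def
      by (intro CollectI exI[of _ "r*t"] exI[of _ "scale r c"]) (simp add: scale_right_distrib)
  qed
  have Iid: "lie_ideal scale br I"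
    unfolding lie_ideal_def using Isub QI prodQ by blast
  have ab: "\<And>x y. x \<in> I \<Longrightarrow> y \<in> I \<Longrightarrow> br x y = 0"
  proof -
    fix x y assume "x \<in> I" "y \<in> I"
    then obtain t c s d where xy: "x = scale t a + c" "c \<in> Q" "y = scale s a + d" "d \<in> Q"
      unfolding I_def by blast
    have "br c a = 0" using anti[of a c] aQ[OF xy(2)] by simp
    thus "br x y = 0" using xy S2 aQ[OF xy(4)]
      by (simp add: addl addr scl scr alt)
  qed
  have "lower_central scale br I (Suc 0) = {0}"
  proof -
    have "{br x y | x y. x \<in> I \<and> y \<in> lower_central scale br I 0} = {0}"
      using ab aI by (auto intro!: exI[of _ a])
    thus ?thesis by (simp add: lie_prod_def)
  qed
  hence nil: "nilpotent_ideal scale br I" unfolding nilpotent_ideal_def using Iid by blast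
  show ?thesis unfolding fitting_def using nil aI by blast
qed

end
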